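(* Let $\mathcal R=(c_0,|||\cdot|||)$ be Read's space (defined in the context). Under the canonical identification of the bidual $\mathcal R^{**}$ with $\ell_\infty$ (coming from $c_0^{**}=\ell_\infty$ as vector spaces, the norm $|||\cdot|||$ being equivalent to $\|\cdot\|_\infty$), the bidual norm of $\mathcal R^{**}$ is given, for every $\bar x\in\ell_\infty$, by the same formula $$|||\bar x||| = \|\bar x\|_\infty + \sum_{n \in \mathbb N} 2^{-a_n^2}\left|\langle \bar x, u_n - e_{a_n} \rangle\right|.$$ That is, $\mathcal R^{**}$ is isometric to $\ell_\infty$ equipped with this norm.
   Context: Let $c_{00}(\mathbb Q)$ be the set of finitely supported sequences with rational coefficients, and let $(u_n)_{n\in\mathbb N}$ be a sequence in $c_{00}(\mathbb Q)$ which lists every element of $c_{00}(\mathbb Q)$ infinitely many times. Let $(a_n)_{n\in\mathbb N}$ be a strictly increasing sequence of positive integers with $a_n>\max\operatorname{supp} u_n$ and $a_n>\|u_n\|_1$ for every $n$. $(e_n)$ denotes the canonical unit vectors and $\langle x,y\rangle=\sum_n x_ny_n$ for $x\in\ell_\infty$, $y\in\ell_1$. Read's norm on $c_0$ is $|||x||| = \|x\|_\infty + \sum_{n} 2^{-a_n^2}|\langle x, u_n - e_{a_n}\rangle|$ for $x\in c_0$; it satisfies $\|x\|_\infty\le|||x|||\le 3\|x\|_\infty$, and Read's space is $\mathcal R=(c_0,|||\cdot|||)$. All spaces are real. *)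

theory Defs
  imports "HOL-Analysis.Analysis"
begin

text \<open>Sequences are functions nat => real (indices start at 0).\<close>

definition unitvec :: "nat \<Rightarrow> nat \<Rightarrow> real" where
  "unitvec n = (\<lambda>k. if k = n then 1 else 0)"

definition pairing :: "(nat \<Rightarrow> real) \<Rightarrow> (nat \<Rightarrow> real) \<Rightarrow> real" where
  "pairing x y = (\<Sum>k. x k * y k)"

definition sup_norm :: "(nat \<Rightarrow> real) \<Rightarrow> real" where
  "sup_norm x = (SUP k. \<bar>x k\<bar>)"

definition l1_norm :: "(nat \<Rightarrow> real) \<Rightarrow> real" where
  "l1_norm y = (\<Sum>k. \<bar>y k\<bar>)"

definition in_c0 :: "(nat \<Rightarrow> real) \<Rightarrow> bool" where
  "in_c0 x \<longleftrightarrow> x \<longlonglongrightarrow> 0"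

definition in_linf :: "(nat \<Rightarrow> real) \<Rightarrow> bool" where
  "in_linf x \<longleftrightarrow> bounded (range x)"

definition in_l1 :: "(nat \<Rightarrow> real) \<Rightarrow> bool" where
  "in_l1 y \<longleftrightarrow> summable (\<lambda>k. \<bar>y k\<bar>)"

definition c00Q :: "(nat \<Rightarrow> rat) set" where
  "c00Q = {v. finite {k. v k \<noteq> 0}}"

definition read_data :: "(nat \<Rightarrow> nat \<Rightarrow> rat) \<Rightarrow> (nat \<Rightarrow> nat) \<Rightarrow> bool" where
  "read_data u a \<longleftrightarrow>
     (\<forall>n. u n \<in> c00Q) \<and>
     (\<forall>v\<in>c00Q. infinite {n. u n = v}) \<and>
     strict_mono a \<and> (\<forall>n. 0 < a n) \<and>
     (\<forall>n. \<forall>k. u n k \<noteq> 0 \<longrightarrow> k < a n) \<and>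
     (\<forall>n. l1_norm (\<lambda>k. real_of_rat (u n k)) < real (a n))"

definition read_norm :: "(nat \<Rightarrow> nat \<Rightarrow> rat) \<Rightarrow> (nat \<Rightarrow> nat) \<Rightarrow> (nat \<Rightarrow> real) \<Rightarrow> real" where
  "read_norm u a x = sup_norm x +
     (\<Sum>n. inverse (2 ^ (a n ^ 2)) *
        \<bar>pairing x (\<lambda>k. real_of_rat (u n k) - unitvec (a n) k)\<bar>)"

text \<open>Dual unit ball of Read's space, with \<open>\<R>^* = c_0^* \<cong> \<ell>_1\<close> via the pairing:
  \<open>y \<in> \<ell>_1\<close> with dual norm \<open>sup {|<x,y>| : x \<in> c_0, |||x||| \<le> 1} \<le> 1\<close>.\<close>
definition read_dual_ball :: "(nat \<Rightarrow> nat \<Rightarrow> rat) \<Rightarrow> (nat \<Rightarrow> nat) \<Rightarrow> (nat \<Rightarrow> real) set" where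
  "read_dual_ball u a = {y. in_l1 y \<and> (\<forall>x. in_c0 x \<longrightarrow> \<bar>pairing x y\<bar> \<le> read_norm u a x)}"

text \<open>Bidual norm of \<open>x \<in> \<ell>_\<infinity>\<close>, viewed as the functional \<open>y \<mapsto> <x,y>\<close> on \<open>\<R>^*\<close>.\<close>
definition read_bidual_norm :: "(nat \<Rightarrow> nat \<Rightarrow> rat) \<Rightarrow> (nat \<Rightarrow> nat) \<Rightarrow> (nat \<Rightarrow> real) \<Rightarrow> real" where
  "read_bidual_norm u a x = (SUP y \<in> read_dual_ball u a. \<bar>pairing x y\<bar>)"

end

theory Submission
  imports Defs
begin

definition vv :: "(nat \<Rightarrow> nat \<Rightarrow> rat) \<Rightarrow> (nat \<Rightarrow> nat) \<Rightarrow> nat \<Rightarrow> nat \<Rightarrow> real" where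
  "vv u a n = (\<lambda>k. real_of_rat (u n k) - unitvec (a n) k)"

definition cc :: "(nat \<Rightarrow> nat) \<Rightarrow> nat \<Rightarrow> real" where
  "cc a n = inverse (2 ^ (a n ^ 2))"

lemma read_norm_alt:
  "read_norm u a x = sup_norm x + (\<Sum>n. cc a n * \<bar>pairing x (vv u a n)\<bar>)"
  unfolding read_norm_def vv_def cc_def by simp

lemma cc_pos: "0 < cc a n" unfolding cc_def by simp

lemma fin_suminf:
  fixes f :: "nat \<Rightarrow> real"
  assumes "\<And>j. j \<ge> K \<Longrightarrow> f j = 0"
  shows "suminf f = (\<Sum>j<K. f j)" "summable f"
proof -
  have "\<And>j. j \<notin> {..<K} \<Longrightarrow> f j = 0" using assms by simp
  thus "suminf f = (\<Sum>j<K. f j)" "summable f"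
    by (auto intro: suminf_finite[of "{..<K}"] summable_finite[of "{..<K}"])
qed

lemma vv_supp:
  assumes "read_data u a" "a n < k"
  shows "vv u a n k = 0"
  using assms unfolding read_data_def vv_def unitvec_def
  by (metis (mono_tags, lifting) less_imp_not_less not_less_iff_gr_or_eq of_rat_0 diff_zero)

lemma pair_vv:
  assumes "read_data u a" "a n < K"
  shows "pairing x (vv u a n) = (\<Sum>j<K. x j * vv u a n j)"
  unfolding pairing_def
  by (rule fin_suminf(1)) (use assms vv_supp in force)

lemma vv_l1:
  assumes "read_data u a"
  shows "(\<Sum>j<Suc (a n). \<bar>vv u a n j\<bar>) \<le> real (a n) + 1"
proof -
  have fs: "finite {k. u n k \<noteq> 0}" using assms unfolding read_data_def c00Q_def by auto
  have summ: "summable (\<lambda>k. \<bar>real_of_rat (u n k)\<bar>)"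
    by (rule summable_finite[OF fs]) auto
  have "(\<Sum>j<Suc (a n). \<bar>real_of_rat (u n j)\<bar>) \<le> l1_norm (\<lambda>k. real_of_rat (u n k))"
    unfolding l1_norm_def by (rule sum_le_suminf[OF summ]) auto
  also have "\<dots> \<le> real (a n)" using assms unfolding read_data_def by (simp add: less_imp_le)
  finally have A: "(\<Sum>j<Suc (a n). \<bar>real_of_rat (u n j)\<bar>) \<le> real (a n)" .
  have B: "(\<Sum>j<Suc (a n). \<bar>unitvec (a n) j\<bar>) = 1"
    unfolding unitvec_def by (simp add: if_distrib sum.If_cases cong: if_cong)
  have "(\<Sum>j<Suc (a n). \<bar>vv u a n j\<bar>) \<le> (\<Sum>j<Suc (a n). \<bar>real_of_rat (u n j)\<bar> + \<bar>unitvec (a n) j\<bar>)"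
    unfolding vv_def by (rule sum_mono) (metis abs_triangle_ineq4)
  also have "\<dots> \<le> real (a n) + 1" using A B by (simp add: sum.distrib)
  finally show ?thesis .
qed

lemma pair_bound:
  assumes "read_data u a" "\<And>j. \<bar>x j\<bar> \<le> B"
  shows "\<bar>pairing x (vv u a n)\<bar> \<le> B * (real (a n) + 1)"
proof -
  have B0: "0 \<le> B" using assms(2)[of 0] by simp
  have "\<bar>pairing x (vv u a n)\<bar> = \<bar>\<Sum>j<Suc (a n). x j * vv u a n j\<bar>"
    using pair_vv[OF assms(1), of n "Suc (a n)" x] by simp
  also have "\<dots> \<le> (\<Sum>j<Suc (a n). \<bar>x j * vv u a n j\<bar>)" by (rule sum_abs)
  also have "\<dots> \<le> (\<Sum>j<Suc (a n). B * \<bar>vv u a n j\<bar>)"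
    by (rule sum_mono) (simp add: abs_mult assms(2) mult_right_mono)
  also have "\<dots> = B * (\<Sum>j<Suc (a n). \<bar>vv u a n j\<bar>)" by (simp only: sum_distrib_left)
  also have "\<dots> \<le> B * (real (a n) + 1)" by (rule mult_left_mono[OF vv_l1[OF assms(1)] B0])
  finally show ?thesis .
qed

lemma nat_geom: "n \<le> m \<Longrightarrow> (m + 1) * 2 ^ n \<le> 2 * 2 ^ (m^2::nat)"
proof -
  assume "n \<le> m"
  have "(m+1) \<le> 2^m" using less_exp[of m] by linarith
  moreover have "(2::nat)^n \<le> 2^m" using \<open>n \<le> m\<close> by (simp add: power_increasing)
  ultimately have "(m + 1) * 2 ^ n \<le> 2^m * 2^m" by (rule mult_mono) auto
  also have "\<dots> = 2^(2*m)" by (simp add: power_add[symmetric] mult_2)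
  also have "\<dots> \<le> 2^(m^2 + 1)"
  proof (rule power_increasing)
    show "2*m \<le> m^2 + 1"
    proof (cases m)
      case (Suc k) then show ?thesis by (simp add: power2_eq_square)
    qed simp
  qed simp
  finally show ?thesis by simp
qed

lemma cc_bound:
  assumes "read_data u a"
  shows "cc a n * (real (a n) + 1) \<le> 2 * (1/2)^n"
proof -
  have "n \<le> a n" using assms unfolding read_data_def by (simp add: strict_mono_imp_increasing)
  from nat_geom[OF this] have "real ((a n + 1) * 2 ^ n) \<le> real (2 * 2 ^ (a n^2))"
    by linarith
  hence "(real (a n) + 1) * 2 ^ n \<le> 2 * 2 ^ (a n^2)" by (simp add: algebra_simps)
  thus ?thesis unfolding cc_def
    by (simp add: field_simps power_divide del: of_nat_add)
qed

lemma series_bound: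
  assumes "read_data u a" "\<And>j. \<bar>x j\<bar> \<le> B"
  shows "cc a n * \<bar>pairing x (vv u a n)\<bar> \<le> B * 2 * (1/2)^n"
proof -
  have B0: "0 \<le> B" using assms(2)[of 0] by simp
  have "cc a n * \<bar>pairing x (vv u a n)\<bar> \<le> cc a n * (B * (real (a n) + 1))"
    using pair_bound[OF assms] cc_pos[of a n] by (simp add: mult_left_mono)
  also have "\<dots> = B * (cc a n * (real (a n) + 1))" by simp
  also have "\<dots> \<le> B * (2 * (1/2)^n)" using cc_bound[OF assms(1)] B0 by (rule mult_left_mono)
  finally show ?thesis by simp
qed

lemma series_summable:
  assumes "read_data u a" "\<And>j. \<bar>x j\<bar> \<le> B"
  shows "summable (\<lambda>n. cc a n * \<bar>pairing x (vv u a n)\<bar>)"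
proof (rule summable_comparison_test)
  show "\<exists>N. \<forall>n\<ge>N. norm (cc a n * \<bar>pairing x (vv u a n)\<bar>) \<le> B * 2 * (1/2)^n"
  proof (intro exI[of _ 0] allI impI)
    fix n :: nat
    show "norm (cc a n * \<bar>pairing x (vv u a n)\<bar>) \<le> B * 2 * (1/2)^n"
      using series_bound[OF assms, of n] cc_pos[of a n] by (simp add: abs_mult)
  qed
  show "summable (\<lambda>n. B * 2 * (1/2::real)^n)"
    by (intro summable_mult summable_geometric) simp
qed

lemma linf_bound:
  assumes "in_linf x" obtains B where "\<And>j. \<bar>x j\<bar> \<le> B"
  using assms unfolding in_linf_def bounded_iff by auto

lemma c0_bound:
  assumes "in_c0 x" obtains B where "\<And>j. \<bar>x j\<bar> \<le> B"
proof -
  have "Bseq x" using assms unfolding in_c0_def by (auto intro: convergent_imp_Bseq convergentI)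
  thus ?thesis using that unfolding Bseq_def by auto
qed

lemma bdd_x: fixes x :: "nat \<Rightarrow> real" shows "(\<And>j. \<bar>x j\<bar> \<le> B) \<Longrightarrow> bdd_above (range (\<lambda>k. \<bar>x k\<bar>))"
  by (rule bdd_aboveI2[where M=B]) auto

lemma le_sup_norm: fixes x :: "nat \<Rightarrow> real" shows "(\<And>j. \<bar>x j\<bar> \<le> B) \<Longrightarrow> \<bar>x k\<bar> \<le> sup_norm x"
  unfolding sup_norm_def by (rule cSUP_upper[OF _ bdd_x]) auto

lemma read_norm_nonneg:
  assumes "read_data u a" "\<And>j. \<bar>x j\<bar> \<le> B"
  shows "0 \<le> read_norm u a x"
proof -
  have "0 \<le> sup_norm x" using le_sup_norm[where x=x and B=B and k=0, OF assms(2)] by linarith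
  moreover have "0 \<le> (\<Sum>n. cc a n * \<bar>pairing x (vv u a n)\<bar>)"
    by (rule suminf_nonneg[OF series_summable[OF assms]]) (simp add: cc_pos less_imp_le)
  ultimately show ?thesis unfolding read_norm_alt by simp
qed


lemma upper:
  assumes rd: "read_data u a" and xb: "\<And>j. \<bar>x j\<bar> \<le> B" and y: "y \<in> read_dual_ball u a"
  shows "\<bar>pairing x y\<bar> \<le> read_norm u a x"
proof -
  define xN where "xN N = (\<lambda>k. if k < N then x k else 0)" for N :: nat
  have xNb: "\<bar>xN N j\<bar> \<le> B" for N j
    using xb[of j] xb[of 0] unfolding xN_def by auto
  have yl1: "summable (\<lambda>k. \<bar>y k\<bar>)" and yb: "\<And>z. in_c0 z \<Longrightarrow> \<bar>pairing z y\<bar> \<le> read_norm u a z"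
    using y unfolding read_dual_ball_def in_l1_def by auto
  have c0: "in_c0 (xN N)" for N
    unfolding in_c0_def
    by (rule tendsto_eventually) (auto simp: xN_def eventually_sequentially intro!: exI[of _ N])
  define S where "S N = (\<Sum>n. cc a n * \<bar>pairing (xN N) (vv u a n)\<bar>)" for N
  have supN: "sup_norm (xN N) \<le> sup_norm x" for N
    unfolding sup_norm_def[of "xN N"]
  proof (rule cSUP_least)
    fix k
    have "\<bar>xN N k\<bar> \<le> \<bar>x k\<bar>" unfolding xN_def by auto
    also have "\<dots> \<le> sup_norm x" by (rule le_sup_norm[OF xb])
    finally show "\<bar>xN N k\<bar> \<le> sup_norm x" .
  qed simp
  have le: "\<bar>pairing (xN N) y\<bar> \<le> sup_norm x + S N" for N
    using yb[OF c0[of N]] supN[of N] unfolding read_norm_alt S_def by linarith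
  have summ: "summable (\<lambda>k. x k * y k)"
  proof (rule summable_comparison_test)
    show "\<exists>N. \<forall>n\<ge>N. norm (x n * y n) \<le> B * \<bar>y n\<bar>"
      using xb by (auto simp: abs_mult intro!: mult_right_mono)
    show "summable (\<lambda>n. B * \<bar>y n\<bar>)" by (rule summable_mult[OF yl1])
  qed
  have pN: "pairing (xN N) y = (\<Sum>k<N. x k * y k)" for N
    unfolding pairing_def by (subst fin_suminf(1)[of N]) (auto simp: xN_def)
  have lim1: "(\<lambda>N. \<bar>pairing (xN N) y\<bar>) \<longlonglongrightarrow> \<bar>pairing x y\<bar>"
  proof (rule tendsto_rabs)
    show "(\<lambda>N. pairing (xN N) y) \<longlonglongrightarrow> pairing x y"
      unfolding pN using summable_LIMSEQ[OF summ] by (simp only: pairing_def)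
  qed
  have lim2: "S \<longlonglongrightarrow> (\<Sum>n. cc a n * \<bar>pairing x (vv u a n)\<bar>)"
  proof -
    have "eventually (\<lambda>N. summable (\<lambda>k. norm (cc a k * \<bar>pairing (xN N) (vv u a k)\<bar>))) sequentially \<and>
          summable (\<lambda>n. norm (cc a n * \<bar>pairing x (vv u a n)\<bar>)) \<and>
          ((\<lambda>N. \<Sum>k. cc a k * \<bar>pairing (xN N) (vv u a k)\<bar>) \<longlonglongrightarrow> (\<Sum>n. cc a n * \<bar>pairing x (vv u a n)\<bar>))"
    proof (rule tannerys_theorem[where M = "\<lambda>n. B * 2 * (1/2)^n"])
      fix k
      have "eventually (\<lambda>N. cc a k * \<bar>pairing (xN N) (vv u a k)\<bar> = cc a k * \<bar>pairing x (vv u a k)\<bar>) sequentially"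
        unfolding eventually_sequentially
      proof (intro exI[of _ "Suc (a k)"] allI impI)
        fix N assume N: "Suc (a k) \<le> N"
        have "pairing (xN N) (vv u a k) = (\<Sum>j<Suc (a k). xN N j * vv u a k j)"
          by (rule pair_vv[OF rd]) simp
        also have "\<dots> = (\<Sum>j<Suc (a k). x j * vv u a k j)"
          by (rule sum.cong) (use N in \<open>auto simp: xN_def\<close>)
        also have "\<dots> = pairing x (vv u a k)"
          by (rule pair_vv[OF rd, symmetric]) simp
        finally show "cc a k * \<bar>pairing (xN N) (vv u a k)\<bar> = cc a k * \<bar>pairing x (vv u a k)\<bar>" by simp
      qed
      thus "((\<lambda>N. cc a k * \<bar>pairing (xN N) (vv u a k)\<bar>) \<longlongrightarrow> cc a k * \<bar>pairing x (vv u a k)\<bar>) sequentially"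
        by (rule tendsto_eventually)
    next
      show "\<forall>\<^sub>F (k, N) in at_top \<times>\<^sub>F sequentially. norm (cc a k * \<bar>pairing (xN N) (vv u a k)\<bar>) \<le> B * 2 * (1/2)^k"
      proof (intro always_eventually allI, clarify)
        fix k N
        show "norm (cc a k * \<bar>pairing (xN N) (vv u a k)\<bar>) \<le> B * 2 * (1/2)^k"
          using series_bound[where x="xN N" and B=B and n=k, OF rd xNb] cc_pos[of a k] by (simp add: abs_mult)
      qed
    next
      show "summable (\<lambda>n. B * 2 * (1/2::real)^n)"
        by (intro summable_mult summable_geometric) simp
    qed simp
    thus ?thesis unfolding S_def by blast
  qed
  have "\<bar>pairing x y\<bar> \<le> sup_norm x + (\<Sum>n. cc a n * \<bar>pairing x (vv u a n)\<bar>)"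
    by (rule LIMSEQ_le[OF lim1 tendsto_add[OF tendsto_const lim2]]) (use le in auto)
  thus ?thesis unfolding read_norm_alt .
qed


lemma lower:
  assumes rd: "read_data u a" and xb: "\<And>j. \<bar>x j\<bar> \<le> B" and e: "0 < e"
  shows "\<exists>y\<in>read_dual_ball u a. read_norm u a x - 2 * e < \<bar>pairing x y\<bar>"
proof -
  have "sup_norm x - e < (SUP k. \<bar>x k\<bar>)" using e unfolding sup_norm_def by simp
  then obtain k where k: "sup_norm x - e < \<bar>x k\<bar>"
    using less_cSUP_iff[OF _ bdd_x[OF xb]] by auto
  define S where "S = (\<Sum>n. cc a n * \<bar>pairing x (vv u a n)\<bar>)"
  have "(\<lambda>M. \<Sum>n<M. cc a n * \<bar>pairing x (vv u a n)\<bar>) \<longlonglongrightarrow> S"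
    unfolding S_def by (rule summable_LIMSEQ[OF series_summable[OF rd xb]])
  from order_tendstoD(1)[OF this, of "S - e"] e
  obtain M where M: "S - e < (\<Sum>n<M. cc a n * \<bar>pairing x (vv u a n)\<bar>)"
    unfolding eventually_sequentially by auto
  define sg where "sg n = sgn (pairing x (vv u a n))" for n
  define z where "z j = sgn (x k) * unitvec k j + (\<Sum>n<M. cc a n * sg n * vv u a n j)" for j
  define K where "K = Suc (k + (\<Sum>n<M. a n))"
  have z0: "z j = 0" if "K \<le> j" for j
  proof -
    have "unitvec k j = 0" using that unfolding K_def unitvec_def by auto
    moreover have "vv u a n j = 0" if "n < M" for n
    proof (rule vv_supp[OF rd])
      have "a n \<le> (\<Sum>n<M. a n)" by (rule member_le_sum) (use \<open>n < M\<close> in auto)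
      thus "a n < j" using \<open>K \<le> j\<close> unfolding K_def by linarith
    qed
    ultimately show ?thesis unfolding z_def by simp
  qed
  have pz: "pairing x' z = sgn (x k) * x' k + (\<Sum>n<M. cc a n * sg n * pairing x' (vv u a n))" for x'
  proof -
    have "pairing x' z = (\<Sum>j<K. x' j * z j)"
      unfolding pairing_def by (rule fin_suminf(1)) (simp add: z0)
    also have "\<dots> = (\<Sum>j<K. sgn (x k) * (x' j * unitvec k j)) + (\<Sum>j<K. \<Sum>n<M. cc a n * sg n * (x' j * vv u a n j))"
      unfolding z_def by (simp add: algebra_simps sum.distrib sum_distrib_left)
    also have "(\<Sum>j<K. sgn (x k) * (x' j * unitvec k j)) = sgn (x k) * x' k"
      unfolding unitvec_def K_def by (simp add: if_distrib sum.If_cases cong: if_cong)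
    also have "(\<Sum>j<K. \<Sum>n<M. cc a n * sg n * (x' j * vv u a n j)) = (\<Sum>n<M. cc a n * sg n * (\<Sum>j<K. x' j * vv u a n j))"
      by (subst sum.swap) (simp add: sum_distrib_left)
    also have "\<dots> = (\<Sum>n<M. cc a n * sg n * pairing x' (vv u a n))"
    proof (rule sum.cong[OF refl])
      fix n assume "n \<in> {..<M}"
      hence "a n \<le> (\<Sum>n<M. a n)" by (intro member_le_sum) auto
      hence "a n < K" unfolding K_def by linarith
      thus "cc a n * sg n * (\<Sum>j<K. x' j * vv u a n j) = cc a n * sg n * pairing x' (vv u a n)"
        using pair_vv[OF rd] by simp
    qed
    finally show ?thesis .
  qed
  have inb: "z \<in> read_dual_ball u a"
    unfolding read_dual_ball_def
  proof (intro CollectI conjI allI impI)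
    show "in_l1 z" unfolding in_l1_def by (rule fin_suminf(2)[of K]) (simp add: z0)
    fix x' assume "in_c0 x'"
    then obtain B' where b': "\<And>j. \<bar>x' j\<bar> \<le> B'" using c0_bound by blast
    have "\<bar>pairing x' z\<bar> \<le> \<bar>sgn (x k) * x' k\<bar> + \<bar>\<Sum>n<M. cc a n * sg n * pairing x' (vv u a n)\<bar>"
      unfolding pz by (rule abs_triangle_ineq)
    also have "\<bar>sgn (x k) * x' k\<bar> \<le> sup_norm x'"
      using le_sup_norm[where x=x' and B=B' and k=k, OF b'] by (auto simp: abs_mult sgn_if)
    also have "\<bar>\<Sum>n<M. cc a n * sg n * pairing x' (vv u a n)\<bar> \<le> (\<Sum>n<M. cc a n * \<bar>pairing x' (vv u a n)\<bar>)"
    proof -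
      have "\<bar>\<Sum>n<M. cc a n * sg n * pairing x' (vv u a n)\<bar> \<le> (\<Sum>n<M. \<bar>cc a n * sg n * pairing x' (vv u a n)\<bar>)"
        by (rule sum_abs)
      also have "\<dots> \<le> (\<Sum>n<M. cc a n * \<bar>pairing x' (vv u a n)\<bar>)"
      proof (rule sum_mono)
        fix n
        have "\<bar>sg n\<bar> \<le> 1" unfolding sg_def by (simp add: sgn_if)
        hence "\<bar>sg n\<bar> * \<bar>pairing x' (vv u a n)\<bar> \<le> \<bar>pairing x' (vv u a n)\<bar>"
          by (simp add: mult_left_le_one_le)
        thus "\<bar>cc a n * sg n * pairing x' (vv u a n)\<bar> \<le> cc a n * \<bar>pairing x' (vv u a n)\<bar>"
          using cc_pos[of a n] by (simp add: abs_mult mult_left_mono)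
      qed
      finally show ?thesis .
    qed
    also have "(\<Sum>n<M. cc a n * \<bar>pairing x' (vv u a n)\<bar>) \<le> (\<Sum>n. cc a n * \<bar>pairing x' (vv u a n)\<bar>)"
      by (rule sum_le_suminf[OF series_summable[OF rd b']]) (auto simp: cc_pos less_imp_le)
    finally show "\<bar>pairing x' z\<bar> \<le> read_norm u a x'" unfolding read_norm_alt by simp
  qed
  have "pairing x z = \<bar>x k\<bar> + (\<Sum>n<M. cc a n * \<bar>pairing x (vv u a n)\<bar>)"
  proof -
    have "sgn t * t = \<bar>t\<bar>" for t :: real by (simp add: sgn_if)
    thus ?thesis unfolding pz sg_def by (simp add: mult.assoc)
  qed
  hence "read_norm u a x - 2 * e < \<bar>pairing x z\<bar>"
    using k M abs_ge_self[of "pairing x z"] unfolding read_norm_alt S_def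
    by linarith
  with inb show ?thesis by blast
qed

theorem proposition2p1:
  fixes u :: "nat \<Rightarrow> nat \<Rightarrow> rat" and a :: "nat \<Rightarrow> nat" and x :: "nat \<Rightarrow> real"
  assumes "read_data u a"
    and "in_linf x"
  shows "read_bidual_norm u a x = read_norm u a x"
proof -
  obtain B where xb: "\<And>j. \<bar>x j\<bar> \<le> B" using linf_bound[OF assms(2)] by blast
  have ne: "read_dual_ball u a \<noteq> {}" using lower[where x=x and B=B and e=1, OF assms(1) xb] by auto
  have ub: "\<And>y. y \<in> read_dual_ball u a \<Longrightarrow> \<bar>pairing x y\<bar> \<le> read_norm u a x"
    by (rule upper[where x=x and B=B, OF assms(1) xb])
  have bdd: "bdd_above ((\<lambda>y. \<bar>pairing x y\<bar>) ` read_dual_ball u a)"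
    by (rule bdd_aboveI2[where M="read_norm u a x"]) (rule ub)
  have le1: "read_bidual_norm u a x \<le> read_norm u a x"
    unfolding read_bidual_norm_def by (rule cSUP_least[OF ne ub])
  have le2: "read_norm u a x - 2 * e < read_bidual_norm u a x" if e: "0 < e" for e
  proof -
    obtain y where y: "y \<in> read_dual_ball u a" "read_norm u a x - 2 * e < \<bar>pairing x y\<bar>"
      using lower[where x=x and B=B and e=e, OF assms(1) xb e] by auto
    have "\<bar>pairing x y\<bar> \<le> read_bidual_norm u a x"
      unfolding read_bidual_norm_def by (rule cSUP_upper[OF y(1) bdd])
    with y(2) show ?thesis by linarith
  qed
  show ?thesis
  proof (rule antisym[OF le1], rule ccontr)
    assume "\<not> read_norm u a x \<le> read_bidual_norm u a x"
    hence "0 < (read_norm u a x - read_bidual_norm u a x) / 4" by simp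
    from le2[OF this] \<open>\<not> read_norm u a x \<le> read_bidual_norm u a x\<close> show False by (simp add: field_simps)
  qed
qed

end
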